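(* Let $\mathcal{E}_{\mathrm{MUB}}$ be a set of $2^n+1$ unitaries on $(\mathbb{C}^2)^{\otimes n}$ such that the orthonormal bases $\{U^{\dagger}|\mathbf{b}\rangle:\mathbf{b}\in\{0,1\}^n\}$, $U\in\mathcal{E}_{\mathrm{MUB}}$, form a complete set of mutually unbiased bases. Let $O$ be a Hermitian observable and $O_0=O-\operatorname{tr}(O)\mathbb{I}/2^n$. Then $$\|O_0\|^2_{\mathrm{s},\mathcal{E}_{\mathrm{MUB}}}\le(2^n+1)\operatorname{tr}(O_0^2),\qquad \|O_0\|^2_{\mathrm{ls},\mathcal{E}_{\mathrm{MUB}}}=\frac{2^n+1}{2^n}\operatorname{tr}(O_0^2).$$
   Context: Bases $\{|e_k\rangle\}$ and $\{|f_l\rangle\}$ of $\mathbb{C}^{2^n}$ are mutually unbiased if $|\langle e_k|f_l\rangle|^2=2^{-n}$ for all $k,l$; a complete set consists of $2^n+1$ pairwise mutually unbiased bases. Shadow estimation with ensemble $\mathcal{E}$: given a state $\rho$, pick $U\in\mathcal{E}$ uniformly at random, measure $U\rho U^{\dagger}$ in the computational basis, obtaining $\mathbf{b}$ with probability $\langle\mathbf{b}|U\rho U^{\dagger}|\mathbf{b}\rangle$, and form the snapshot $\hat\rho=\mathcal{M}_{Cl}^{-1}(U^{\dagger}|\mathbf{b}\rangle\langle\mathbf{b}|U)$ where $\mathcal{M}_{Cl}^{-1}(A)=(2^n+1)A-\operatorname{tr}(A)\mathbb{I}$. The shadow norm is $\|O_0\|^2_{\mathrm{s},\mathcal{E}}=\max_{\rho}\mathbb{E}_{U,\mathbf{b}}[\operatorname{tr}(O_0\hat\rho)^2]$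 (maximum over density operators $\rho$), and the locally-scrambled shadow norm $\|O_0\|^2_{\mathrm{ls},\mathcal{E}}$ is the same expectation evaluated at $\rho=\mathbb{I}/2^n$. *)

theory Defs
  imports "Jordan_Normal_Form.Schur_Decomposition"
begin

(* Matrices are complex d x d JNF matrices, d = 2^n; computational basis |b>, b in {0,1}^n,
   is identified with unit_vec d b, b < d. *)

definition mtrace :: "complex mat \<Rightarrow> complex" where
  "mtrace A = (\<Sum>i<dim_row A. A $$ (i,i))"

definition unitary_m :: "nat \<Rightarrow> complex mat \<Rightarrow> bool" where
  "unitary_m d U \<longleftrightarrow> U \<in> carrier_mat d d \<and> U * mat_adjoint U = 1\<^sub>m d \<and> mat_adjoint U * U = 1\<^sub>m d"

definition hermitian_m :: "nat \<Rightarrow> complex mat \<Rightarrow> bool" where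
  "hermitian_m d A \<longleftrightarrow> A \<in> carrier_mat d d \<and> mat_adjoint A = A"

definition braket :: "complex vec \<Rightarrow> complex vec \<Rightarrow> complex" where
  "braket v w = conjugate v \<bullet> w"

definition density_op :: "nat \<Rightarrow> complex mat \<Rightarrow> bool" where
  "density_op d \<rho> \<longleftrightarrow> hermitian_m d \<rho> \<and> mtrace \<rho> = 1 \<and>
     (\<forall>v \<in> carrier_vec d. 0 \<le> Re (braket v (\<rho> *\<^sub>v v)))"

definition ketbra :: "complex vec \<Rightarrow> complex vec \<Rightarrow> complex mat" where
  "ketbra v w = mat (dim_vec v) (dim_vec w) (\<lambda>(i,j). v $ i * cnj (w $ j))"

definition basis_vec :: "nat \<Rightarrow> complex mat \<Rightarrow> nat \<Rightarrow> complex vec" where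
  "basis_vec d U b = mat_adjoint U *\<^sub>v unit_vec d b"

definition mutually_unbiased :: "nat \<Rightarrow> complex mat \<Rightarrow> complex mat \<Rightarrow> bool" where
  "mutually_unbiased d U V \<longleftrightarrow>
     (\<forall>k<d. \<forall>l<d. (cmod (braket (basis_vec d U k) (basis_vec d V l)))\<^sup>2 = 1 / real d)"

definition complete_MUB_ensemble :: "nat \<Rightarrow> complex mat set \<Rightarrow> bool" where
  "complete_MUB_ensemble d E \<longleftrightarrow> finite E \<and> card E = d + 1 \<and> (\<forall>U\<in>E. unitary_m d U) \<and>
     (\<forall>U\<in>E. \<forall>V\<in>E. U \<noteq> V \<longrightarrow> mutually_unbiased d U V)"

definition M_Cl_inv :: "nat \<Rightarrow> complex mat \<Rightarrow> complex mat" where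
  "M_Cl_inv d A = of_nat (d + 1) \<cdot>\<^sub>m A - mtrace A \<cdot>\<^sub>m 1\<^sub>m d"

definition snapshot :: "nat \<Rightarrow> complex mat \<Rightarrow> nat \<Rightarrow> complex mat" where
  "snapshot d U b = M_Cl_inv d (mat_adjoint U * ketbra (unit_vec d b) (unit_vec d b) * U)"

definition outcome_prob :: "nat \<Rightarrow> complex mat \<Rightarrow> complex mat \<Rightarrow> nat \<Rightarrow> complex" where
  "outcome_prob d \<rho> U b = braket (unit_vec d b) ((U * \<rho> * mat_adjoint U) *\<^sub>v unit_vec d b)"

(* E_{U,b}[tr(O0 rho_hat)^2], U uniform on E *)
definition shadow_expect :: "nat \<Rightarrow> complex mat set \<Rightarrow> complex mat \<Rightarrow> complex mat \<Rightarrow> complex" where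
  "shadow_expect d E O0 \<rho> = (1 / of_nat (card E)) *
     (\<Sum>U\<in>E. \<Sum>b<d. outcome_prob d \<rho> U b * (mtrace (O0 * snapshot d U b))\<^sup>2)"

definition shadow_norm_sq :: "nat \<Rightarrow> complex mat set \<Rightarrow> complex mat \<Rightarrow> real" where
  "shadow_norm_sq d E O0 = Sup {Re (shadow_expect d E O0 \<rho>) | \<rho>. density_op d \<rho>}"

definition ls_shadow_norm_sq :: "nat \<Rightarrow> complex mat set \<Rightarrow> complex mat \<Rightarrow> real" where
  "ls_shadow_norm_sq d E O0 = Re (shadow_expect d E O0 ((1 / of_nat d) \<cdot>\<^sub>m 1\<^sub>m d))"

end

theory Submission
  imports Defs
begin


lemma sum4: "(\<Sum>a\<in>D. \<Sum>b\<in>D. \<Sum>c\<in>D. \<Sum>e\<in>D. f a * g b * h c * k e) = sum f D * sum g D * sum h D * (sum k D :: complex)"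
  by (simp add: sum_distrib_left[symmetric] sum_distrib_right[symmetric])

lemma swap3: "(\<Sum>x\<in>A. \<Sum>i\<in>B. \<Sum>j\<in>C. H x i j) = (\<Sum>i\<in>B. \<Sum>j\<in>C. \<Sum>x\<in>A. H x i j)"
  by (simp add: sum.swap[of _ A])

lemma swap2: "(\<Sum>x\<in>A. \<Sum>i\<in>B. H x i) = (\<Sum>i\<in>B. \<Sum>x\<in>A. H x i)"
  by (rule sum.swap)

lemma sum4_nonneg_zero:
  fixes f :: "nat \<Rightarrow> nat \<Rightarrow> nat \<Rightarrow> nat \<Rightarrow> real"
  assumes nn: "\<And>a b c e. f a b c e \<ge> 0"
    and z: "(\<Sum>a\<in>D. \<Sum>b\<in>D. \<Sum>c\<in>D. \<Sum>e\<in>D. f a b c e) = 0"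
    and fin: "finite D" and mem: "a \<in> D" "b \<in> D" "c \<in> D" "e \<in> D"
  shows "f a b c e = 0"
proof -
  have "f a b c e \<le> (\<Sum>e\<in>D. f a b c e)" by (rule member_le_sum) (use nn fin mem in auto)
  also have "\<dots> \<le> (\<Sum>c\<in>D. \<Sum>e\<in>D. f a b c e)" by (rule member_le_sum) (use nn fin mem in \<open>auto intro: sum_nonneg\<close>)
  also have "\<dots> \<le> (\<Sum>b\<in>D. \<Sum>c\<in>D. \<Sum>e\<in>D. f a b c e)" by (rule member_le_sum) (use nn fin mem in \<open>auto intro!: sum_nonneg\<close>)
  also have "\<dots> \<le> (\<Sum>a\<in>D. \<Sum>b\<in>D. \<Sum>c\<in>D. \<Sum>e\<in>D. f a b c e)" by (rule member_le_sum) (use nn fin mem in \<open>auto intro!: sum_nonneg\<close>)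
  finally show ?thesis using z nn[of a b c e] by simp
qed

lemma delta_A:
  fixes F :: "nat \<Rightarrow> nat \<Rightarrow> nat \<Rightarrow> nat \<Rightarrow> 'a::comm_monoid_add"
  assumes "finite D"
  shows "(\<Sum>a\<in>D. \<Sum>b\<in>D. \<Sum>c\<in>D. \<Sum>e\<in>D. if a = c \<and> b = e then F a b c e else 0) = (\<Sum>a\<in>D. \<Sum>b\<in>D. F a b a b)"
proof (intro sum.cong refl)
  fix a b assume ab: "a \<in> D" "b \<in> D"
  have "(\<Sum>e\<in>D. if a = c \<and> b = e then F a b c e else 0) = (if a = c then F a b c b else 0)" for c
    by (cases "a = c") (simp_all add: sum.delta ab assms)
  then show "(\<Sum>c\<in>D. \<Sum>e\<in>D. if a = c \<and> b = e then F a b c e else 0) = F a b a b"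
    by (simp add: sum.delta ab assms)
qed

lemma delta_B:
  fixes F :: "nat \<Rightarrow> nat \<Rightarrow> nat \<Rightarrow> nat \<Rightarrow> 'a::comm_monoid_add"
  assumes "finite D"
  shows "(\<Sum>a\<in>D. \<Sum>b\<in>D. \<Sum>c\<in>D. \<Sum>e\<in>D. if a = b \<and> c = e then F a b c e else 0) = (\<Sum>a\<in>D. \<Sum>c\<in>D. F a a c c)"
proof (rule sum.cong[OF refl])
  fix a assume a: "a \<in> D"
  have "(\<Sum>e\<in>D. if a = b \<and> c = e then F a b c e else 0) = (if a = b then F a b c c else 0)" if "c \<in> D" for b c
    by (cases "a = b") (simp_all add: sum.delta that assms)
  have X: "(\<Sum>c\<in>D. \<Sum>e\<in>D. if a = b \<and> c = e then F a b c e else 0) = (if a = b then (\<Sum>c\<in>D. F a b c c) else 0)" for b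
  proof (cases "a = b")
    case True
    have "(\<Sum>e\<in>D. if a = b \<and> c = e then F a b c e else 0) = F a b c c" if "c \<in> D" for c
      using True that assms by (simp add: sum.delta)
    then have "(\<Sum>c\<in>D. \<Sum>e\<in>D. if a = b \<and> c = e then F a b c e else 0) = (\<Sum>c\<in>D. F a b c c)"
      by (rule sum.cong[OF refl])
    then show ?thesis using True by simp
  next
    case False then show ?thesis by simp
  qed
  from X show "(\<Sum>b\<in>D. \<Sum>c\<in>D. \<Sum>e\<in>D. if a = b \<and> c = e then F a b c e else 0) = (\<Sum>c\<in>D. F a a c c)"
    by (simp add: sum.delta a assms)
qed

lemma norm_sq_diff:
  assumes "cnj t = t"
  shows "complex_of_real ((cmod (z - t))^2) = (z * cnj z - z * t) - (t * cnj z - t * t)"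
proof -
  have "complex_of_real ((cmod (z - t))^2) = (z - t) * cnj (z - t)" by (rule complex_norm_square)
  also have "\<dots> = (z - t) * (cnj z - t)" using assms by simp
  finally show ?thesis by (simp add: algebra_simps)
qed

lemma core_design:
  fixes u :: "'i \<Rightarrow> nat \<Rightarrow> complex" and I :: "'i set" and d :: nat
  defines "ip \<equiv> \<lambda>i j. \<Sum>a<d. cnj (u i a) * u j a"
  defines "G \<equiv> \<lambda>a b c e. \<Sum>i\<in>I. u i a * cnj (u i b) * cnj (u i c) * u i e"
  defines "T \<equiv> \<lambda>a b c e. (if a = c \<and> b = e then 1 else 0) + (if a = b \<and> c = e then 1 else (0::complex))"
  assumes fin: "finite I"
    and nrm: "\<And>i. i \<in> I \<Longrightarrow> ip i i = 1"
    and fp: "(\<Sum>i\<in>I. \<Sum>j\<in>I. (cmod (ip i j))^4) = 2 * real (card I)"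
    and cI: "card I = d * (d + 1)"
  shows "\<forall>a<d. \<forall>b<d. \<forall>c<d. \<forall>e<d. G a b c e = T a b c e"
proof -
  let ?D = "{..<d}"
  have Tm: "Z * T a b c e = (if a = c \<and> b = e then Z else 0) + (if a = b \<and> c = e then Z else 0)" for Z a b c e
    unfolding T_def by (simp add: distrib_left)
  have S1: "(\<Sum>a\<in>?D. \<Sum>b\<in>?D. \<Sum>c\<in>?D. \<Sum>e\<in>?D. G a b c e * cnj (G a b c e)) = 2 * of_nat (card I)"
  proof -
    have "(\<Sum>a\<in>?D. \<Sum>b\<in>?D. \<Sum>c\<in>?D. \<Sum>e\<in>?D. G a b c e * cnj (G a b c e)) =
      (\<Sum>a\<in>?D. \<Sum>b\<in>?D. \<Sum>c\<in>?D. \<Sum>e\<in>?D. \<Sum>i\<in>I. \<Sum>j\<in>I.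
         (u i a * cnj (u j a)) * (cnj (u i b) * u j b) * (cnj (u i c) * u j c) * (u i e * cnj (u j e)))"
      unfolding G_def by (simp add: sum_product mult_ac)
    also have "\<dots> = (\<Sum>i\<in>I. \<Sum>j\<in>I. \<Sum>a\<in>?D. \<Sum>b\<in>?D. \<Sum>c\<in>?D. \<Sum>e\<in>?D.
         (u i a * cnj (u j a)) * (cnj (u i b) * u j b) * (cnj (u i c) * u j c) * (u i e * cnj (u j e)))"
      by (simp add: swap3[of _ I I])
    also have "\<dots> = (\<Sum>i\<in>I. \<Sum>j\<in>I. cnj (ip i j) * ip i j * ip i j * cnj (ip i j))"
      unfolding sum4 ip_def by (simp add: mult_ac)
    also have "\<dots> = (\<Sum>i\<in>I. \<Sum>j\<in>I. of_real ((cmod (ip i j))^4))"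
    proof -
      have "cnj z * z * z * cnj z = of_real ((cmod z)^4)" for z
      proof -
        have e: "z * cnj z = of_real ((cmod z)^2)" using complex_norm_square by simp
        have "cnj z * z * z * cnj z = (z * cnj z)^2" by (simp add: power2_eq_square mult_ac)
        also have "\<dots> = of_real ((cmod z)^4)" unfolding e by (simp flip: power_mult)
        finally show ?thesis .
      qed
      then show ?thesis by simp
    qed
    also have "\<dots> = of_real (\<Sum>i\<in>I. \<Sum>j\<in>I. (cmod (ip i j))^4)" by simp
    also have "\<dots> = 2 * of_nat (card I)" using fp by simp
    finally show ?thesis .
  qed
  have S2: "(\<Sum>a\<in>?D. \<Sum>b\<in>?D. \<Sum>c\<in>?D. \<Sum>e\<in>?D. G a b c e * T a b c e) = 2 * of_nat (card I)"
  proof -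
    have "(\<Sum>a\<in>?D. \<Sum>b\<in>?D. \<Sum>c\<in>?D. \<Sum>e\<in>?D. G a b c e * T a b c e) =
       (\<Sum>i\<in>I. \<Sum>a\<in>?D. \<Sum>b\<in>?D. \<Sum>c\<in>?D. \<Sum>e\<in>?D. u i a * cnj (u i b) * cnj (u i c) * u i e * T a b c e)"
      unfolding G_def by (simp add: sum_distrib_right sum.swap[of _ I])
    also have "\<dots> = (\<Sum>i\<in>I. 2)"
    proof (rule sum.cong[OF refl])
      fix i assume i: "i \<in> I"
      have "(\<Sum>a\<in>?D. \<Sum>b\<in>?D. \<Sum>c\<in>?D. \<Sum>e\<in>?D. u i a * cnj (u i b) * cnj (u i c) * u i e * T a b c e)
        = (\<Sum>a\<in>?D. \<Sum>b\<in>?D. u i a * cnj (u i b) * cnj (u i a) * u i b) + (\<Sum>a\<in>?D. \<Sum>c\<in>?D. u i a * cnj (u i a) * cnj (u i c) * u i c)"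
        unfolding Tm sum.distrib by (simp add: delta_A delta_B)
      also have "\<dots> = 2"
      proof -
        have h1: "(\<Sum>a\<in>?D. \<Sum>b\<in>?D. u i a * cnj (u i b) * cnj (u i a) * u i b) = (\<Sum>a\<in>?D. cnj (u i a) * u i a) * (\<Sum>b\<in>?D. cnj (u i b) * u i b)"
          by (simp add: sum_product mult_ac)
        have h2: "(\<Sum>a\<in>?D. \<Sum>c\<in>?D. u i a * cnj (u i a) * cnj (u i c) * u i c) = (\<Sum>a\<in>?D. cnj (u i a) * u i a) * (\<Sum>b\<in>?D. cnj (u i b) * u i b)"
          by (simp add: sum_product mult_ac)
        have h3: "(\<Sum>a\<in>?D. cnj (u i a) * u i a) = 1" using nrm[OF i] unfolding ip_def by simp
        show ?thesis unfolding h1 h2 h3 by simp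
      qed
      finally show "(\<Sum>a\<in>?D. \<Sum>b\<in>?D. \<Sum>c\<in>?D. \<Sum>e\<in>?D. u i a * cnj (u i b) * cnj (u i c) * u i e * T a b c e) = 2" .
    qed
    also have "\<dots> = 2 * of_nat (card I)" by simp
    finally show ?thesis .
  qed
  have S3: "(\<Sum>a\<in>?D. \<Sum>b\<in>?D. \<Sum>c\<in>?D. \<Sum>e\<in>?D. T a b c e * T a b c e) = 2 * of_nat (card I)"
    unfolding Tm sum.distrib delta_A[OF finite_lessThan] delta_B[OF finite_lessThan] cI
    by (simp add: T_def sum.distrib sum.delta algebra_simps)
  have cT: "cnj (T a b c e) = T a b c e" for a b c e unfolding T_def by simp
  have S2': "(\<Sum>a\<in>?D. \<Sum>b\<in>?D. \<Sum>c\<in>?D. \<Sum>e\<in>?D. T a b c e * cnj (G a b c e)) = 2 * of_nat (card I)"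
  proof -
    have "(\<Sum>a\<in>?D. \<Sum>b\<in>?D. \<Sum>c\<in>?D. \<Sum>e\<in>?D. T a b c e * cnj (G a b c e)) =
      cnj (\<Sum>a\<in>?D. \<Sum>b\<in>?D. \<Sum>c\<in>?D. \<Sum>e\<in>?D. G a b c e * T a b c e)"
      by (simp add: cT mult.commute)
    then show ?thesis unfolding S2 by simp
  qed
  have tot: "(\<Sum>a\<in>?D. \<Sum>b\<in>?D. \<Sum>c\<in>?D. \<Sum>e\<in>?D. of_real ((cmod (G a b c e - T a b c e))^2)) = (0::complex)"
  proof -
    have "(\<Sum>a\<in>?D. \<Sum>b\<in>?D. \<Sum>c\<in>?D. \<Sum>e\<in>?D. of_real ((cmod (G a b c e - T a b c e))^2)) =
      (\<Sum>a\<in>?D. \<Sum>b\<in>?D. \<Sum>c\<in>?D. \<Sum>e\<in>?D. (G a b c e * cnj (G a b c e) - G a b c e * T a b c e)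
          - (T a b c e * cnj (G a b c e) - T a b c e * T a b c e))"
      by (intro sum.cong refl norm_sq_diff cT)
    also have "\<dots> = 0" by (simp add: sum_subtractf S1 S2 S2' S3)
    finally show ?thesis .
  qed
  have tot': "(\<Sum>a\<in>?D. \<Sum>b\<in>?D. \<Sum>c\<in>?D. \<Sum>e\<in>?D. (cmod (G a b c e - T a b c e))^2) = 0"
    using tot by (simp only: of_real_sum[symmetric] of_real_eq_0_iff)
  show ?thesis
  proof (intro allI impI)
    fix a b c e assume "a < d" "b < d" "c < d" "e < d"
    then have "(cmod (G a b c e - T a b c e))^2 = 0"
      using sum4_nonneg_zero[where f="\<lambda>a b c e. (cmod (G a b c e - T a b c e))^2", OF _ tot'] by simp
    then show "G a b c e = T a b c e" by simp
  qed
qed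
lemma prod22: "(\<Sum>a\<in>D. \<Sum>b\<in>D. f a b) * (\<Sum>c\<in>D. \<Sum>e\<in>D. g c e) = (\<Sum>a\<in>D. \<Sum>b\<in>D. \<Sum>c\<in>D. \<Sum>e\<in>D. f a b * (g c e :: complex))"
  by (simp add: sum_distrib_left[symmetric] sum_distrib_right[symmetric])

lemma design_quadratic:
  fixes u :: "'i \<Rightarrow> nat \<Rightarrow> complex" and I :: "'i set" and d :: nat and A :: "nat \<Rightarrow> nat \<Rightarrow> complex"
  assumes fin: "finite I"
    and GT: "\<forall>a<d. \<forall>b<d. \<forall>c<d. \<forall>e<d. (\<Sum>i\<in>I. u i a * cnj (u i b) * cnj (u i c) * u i e) =
        (if a = c \<and> b = e then 1 else 0) + (if a = b \<and> c = e then 1 else (0::complex))"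
    and herm: "\<And>a c. a < d \<Longrightarrow> c < d \<Longrightarrow> cnj (A a c) = A c a"
  shows "(\<Sum>i\<in>I. (\<Sum>a<d. \<Sum>c<d. cnj (u i a) * A a c * u i c)^2) =
     (\<Sum>a<d. \<Sum>c<d. A a c * A c a) + (\<Sum>a<d. A a a)^2"
proof -
  let ?D = "{..<d}"
  define x where "x i = (\<Sum>a<d. \<Sum>c<d. cnj (u i a) * A a c * u i c)" for i
  have cx: "cnj (x i) = x i" for i
  proof -
    have "cnj (x i) = (\<Sum>a<d. \<Sum>c<d. u i a * A c a * cnj (u i c))"
      unfolding x_def by (simp add: herm)
    also have "\<dots> = x i" unfolding x_def by (subst sum.swap) (simp add: mult_ac)
    finally show ?thesis .
  qed
  have "(\<Sum>i\<in>I. (x i)^2) = (\<Sum>i\<in>I. x i * cnj (x i))" by (simp add: cx power2_eq_square)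
  also have "\<dots> = (\<Sum>i\<in>I. \<Sum>a\<in>?D. \<Sum>b\<in>?D. \<Sum>c\<in>?D. \<Sum>e\<in>?D.
      A a b * cnj (A c e) * cnj (u i a * cnj (u i b) * cnj (u i c) * u i e))"
  proof (rule sum.cong[OF refl])
    fix i
    have "x i * cnj (x i) = (\<Sum>a\<in>?D. \<Sum>b\<in>?D. \<Sum>c\<in>?D. \<Sum>e\<in>?D. (cnj (u i a) * A a b * u i b) * cnj (cnj (u i c) * A c e * u i e))"
      unfolding x_def by (simp add: prod22)
    also have "\<dots> = (\<Sum>a\<in>?D. \<Sum>b\<in>?D. \<Sum>c\<in>?D. \<Sum>e\<in>?D.
      A a b * cnj (A c e) * cnj (u i a * cnj (u i b) * cnj (u i c) * u i e))"
      by (intro sum.cong refl) (simp add: mult_ac)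
    finally show "x i * cnj (x i) = \<dots>" .
  qed
  also have "\<dots> = (\<Sum>a\<in>?D. \<Sum>b\<in>?D. \<Sum>c\<in>?D. \<Sum>e\<in>?D.
      A a b * cnj (A c e) * cnj (\<Sum>i\<in>I. u i a * cnj (u i b) * cnj (u i c) * u i e))"
    by (simp add: sum_distrib_left sum.swap[of _ I])
  also have "\<dots> = (\<Sum>a\<in>?D. \<Sum>b\<in>?D. \<Sum>c\<in>?D. \<Sum>e\<in>?D.
      (if a = c \<and> b = e then A a b * cnj (A c e) else 0) + (if a = b \<and> c = e then A a b * cnj (A c e) else 0))"
    by (intro sum.cong refl) (simp add: GT distrib_left)
  also have "\<dots> = (\<Sum>a\<in>?D. \<Sum>b\<in>?D. A a b * cnj (A a b)) + (\<Sum>a\<in>?D. \<Sum>c\<in>?D. A a a * cnj (A c c))"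
    unfolding sum.distrib by (simp add: delta_A delta_B)
  also have "\<dots> = (\<Sum>a<d. \<Sum>c<d. A a c * A c a) + (\<Sum>a<d. A a a)^2"
    by (simp add: herm power2_eq_square sum_product)
  finally show ?thesis unfolding x_def .
qed


lemma adj_carrier: "A \<in> carrier_mat d d \<Longrightarrow> mat_adjoint A \<in> carrier_mat d d"
  unfolding mat_adjoint_def by auto

lemma adj_index: "A \<in> carrier_mat d d \<Longrightarrow> i < d \<Longrightarrow> j < d \<Longrightarrow> mat_adjoint A $$ (i,j) = cnj (A $$ (j,i))"
  unfolding mat_adjoint_def by (simp add: mat_of_rows_index)

lemma mult_index: "A \<in> carrier_mat d k \<Longrightarrow> B \<in> carrier_mat k m \<Longrightarrow> i < d \<Longrightarrow> j < m \<Longrightarrow>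
   (A * B) $$ (i,j) = (\<Sum>l<k. A $$ (i,l) * B $$ (l,j))"
  by (simp add: scalar_prod_def atLeast0LessThan)

lemma multv_index: "A \<in> carrier_mat d k \<Longrightarrow> v \<in> carrier_vec k \<Longrightarrow> i < d \<Longrightarrow>
   (A *\<^sub>v v) $ i = (\<Sum>l<k. A $$ (i,l) * v $ l)"
  by (simp add: scalar_prod_def atLeast0LessThan)

lemma braket_sum: "v \<in> carrier_vec d \<Longrightarrow> w \<in> carrier_vec d \<Longrightarrow> braket v w = (\<Sum>a<d. cnj (v $ a) * w $ a)"
  unfolding braket_def by (simp add: scalar_prod_def atLeast0LessThan)

lemma mtrace_sum: "A \<in> carrier_mat d d \<Longrightarrow> mtrace A = (\<Sum>i<d. A $$ (i,i))"
  unfolding mtrace_def by simp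

lemma basis_vec_carrier: "U \<in> carrier_mat d d \<Longrightarrow> basis_vec d U b \<in> carrier_vec d"
  unfolding basis_vec_def using adj_carrier by (metis mult_mat_vec_carrier unit_vec_carrier)

lemma unit_index: "j < n \<Longrightarrow> unit_vec n i $ j = (if j = i then 1 else 0)"
  unfolding unit_vec_def by simp

lemma basis_vec_index: "U \<in> carrier_mat d d \<Longrightarrow> a < d \<Longrightarrow> b < d \<Longrightarrow> basis_vec d U b $ a = cnj (U $$ (b,a))"
proof -
  assume U: "U \<in> carrier_mat d d" and a: "a < d" and b: "b < d"
  have "basis_vec d U b $ a = (\<Sum>l<d. mat_adjoint U $$ (a,l) * unit_vec d b $ l)"
    unfolding basis_vec_def by (rule multv_index[OF adj_carrier[OF U]]) (use a in auto)
  also have "\<dots> = (\<Sum>l<d. if l = b then cnj (U $$ (b,a)) else 0)"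
    by (rule sum.cong) (use U a in \<open>auto simp: adj_index unit_index\<close>)
  finally show ?thesis using b by simp
qed

lemma unitary_rows: "unitary_m d U \<Longrightarrow> b < d \<Longrightarrow> c < d \<Longrightarrow>
   (\<Sum>a<d. U $$ (b,a) * cnj (U $$ (c,a))) = (if b = c then 1 else 0)"
proof -
  assume u: "unitary_m d U" and b: "b < d" and c: "c < d"
  then have U: "U \<in> carrier_mat d d" and e: "U * mat_adjoint U = 1\<^sub>m d" unfolding unitary_m_def by auto
  have "(U * mat_adjoint U) $$ (b,c) = (\<Sum>a<d. U $$ (b,a) * cnj (U $$ (c,a)))"
    by (subst mult_index[OF U adj_carrier[OF U] b c]) (rule sum.cong, use U c in \<open>auto simp: adj_index\<close>)
  then show ?thesis using e b c by simp
qed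

lemma unitary_cols: "unitary_m d U \<Longrightarrow> a < d \<Longrightarrow> c < d \<Longrightarrow>
   (\<Sum>b<d. cnj (U $$ (b,a)) * U $$ (b,c)) = (if a = c then 1 else 0)"
proof -
  assume u: "unitary_m d U" and a: "a < d" and c: "c < d"
  then have U: "U \<in> carrier_mat d d" and e: "mat_adjoint U * U = 1\<^sub>m d" unfolding unitary_m_def by auto
  have "(mat_adjoint U * U) $$ (a,c) = (\<Sum>b<d. cnj (U $$ (b,a)) * U $$ (b,c))"
    by (subst mult_index[OF adj_carrier[OF U] U a c]) (rule sum.cong, use U a in \<open>auto simp: adj_index\<close>)
  then show ?thesis using e a c by simp
qed

lemma braket_basis: "U \<in> carrier_mat d d \<Longrightarrow> V \<in> carrier_mat d d \<Longrightarrow> b < d \<Longrightarrow> c < d \<Longrightarrow>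
  braket (basis_vec d U b) (basis_vec d V c) = (\<Sum>a<d. U $$ (b,a) * cnj (V $$ (c,a)))"
  apply (subst braket_sum[OF basis_vec_carrier basis_vec_carrier], assumption, assumption)
  apply (rule sum.cong, simp)
  apply (simp add: basis_vec_index mult.commute)
  done

lemma unit_braket: "v \<in> carrier_vec d \<Longrightarrow> b < d \<Longrightarrow> braket (unit_vec d b) v = v $ b"
proof -
  assume v: "v \<in> carrier_vec d" and b: "b < d"
  have "braket (unit_vec d b) v = (\<Sum>a<d. cnj (unit_vec d b $ a) * v $ a)"
    by (rule braket_sum[OF _ v]) simp
  also have "\<dots> = (\<Sum>a<d. if a = b then v $ a else 0)"
    by (rule sum.cong) (auto simp: unit_index)
  finally have "braket (unit_vec d b) v = (\<Sum>a<d. if a = b then v $ a else 0)" .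
  then show ?thesis using b by simp
qed

lemma mat_unit: "(M :: complex mat) \<in> carrier_mat d d \<Longrightarrow> b < d \<Longrightarrow> c < d \<Longrightarrow> (M *\<^sub>v unit_vec d b) $ c = M $$ (c,b)"
proof -
  assume M: "M \<in> carrier_mat d d" and b: "b < d" and c: "c < d"
  have "(M *\<^sub>v unit_vec d b) $ c = (\<Sum>l<d. M $$ (c,l) * unit_vec d b $ l)"
    by (rule multv_index[OF M _ c]) simp
  also have "\<dots> = (\<Sum>l<d. if l = b then M $$ (c,l) else 0)"
    by (rule sum.cong) (auto simp: unit_index)
  finally have "(M *\<^sub>v unit_vec d b) $ c = (\<Sum>l<d. if l = b then M $$ (c,l) else 0)" .
  then show ?thesis using b by simp
qed

lemma outcome_prob_sum: "U \<in> carrier_mat d d \<Longrightarrow> \<rho> \<in> carrier_mat d d \<Longrightarrow> b < d \<Longrightarrow>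
  outcome_prob d \<rho> U b = (\<Sum>a<d. \<Sum>c<d. U $$ (b,a) * \<rho> $$ (a,c) * cnj (U $$ (b,c)))"
proof -
  assume U: "U \<in> carrier_mat d d" and r: "\<rho> \<in> carrier_mat d d" and b: "b < d"
  have Ur: "U * \<rho> \<in> carrier_mat d d" using U r by auto
  have M: "U * \<rho> * mat_adjoint U \<in> carrier_mat d d" using U r adj_carrier[OF U] by auto
  have "outcome_prob d \<rho> U b = (U * \<rho> * mat_adjoint U) $$ (b,b)"
    unfolding outcome_prob_def using M b by (simp add: unit_braket mat_unit)
  also have "\<dots> = (\<Sum>c<d. (U * \<rho>) $$ (b,c) * cnj (U $$ (b,c)))"
    by (subst mult_index[OF Ur adj_carrier[OF U] b b]) (rule sum.cong, use U b in \<open>auto simp: adj_index\<close>)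
  also have "\<dots> = (\<Sum>c<d. \<Sum>a<d. U $$ (b,a) * \<rho> $$ (a,c) * cnj (U $$ (b,c)))"
    by (rule sum.cong) (use U r b in \<open>auto simp del: index_mult_mat simp add: mult_index[OF U r] sum_distrib_right\<close>)
  also have "\<dots> = (\<Sum>a<d. \<Sum>c<d. U $$ (b,a) * \<rho> $$ (a,c) * cnj (U $$ (b,c)))"
    by (rule sum.swap)
  finally show ?thesis .
qed

lemma proj_index: "U \<in> carrier_mat d d \<Longrightarrow> b < d \<Longrightarrow> a < d \<Longrightarrow> c < d \<Longrightarrow>
  (mat_adjoint U * ketbra (unit_vec d b) (unit_vec d b) * U) $$ (a,c) = cnj (U $$ (b,a)) * U $$ (b,c)"
proof -
  assume U: "U \<in> carrier_mat d d" and b: "b < d" and a: "a < d" and c: "c < d"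
  let ?K = "ketbra (unit_vec d b) (unit_vec d b) :: complex mat"
  have K: "?K \<in> carrier_mat d d" unfolding ketbra_def by simp
  have Kx: "?K $$ (i,j) = (if i = b \<and> j = b then 1 else 0)" if "i < d" "j < d" for i j
    unfolding ketbra_def using that by (simp add: unit_index)
  have AK: "mat_adjoint U * ?K \<in> carrier_mat d d" using adj_carrier[OF U] K by auto
  have AKx: "(mat_adjoint U * ?K) $$ (i,j) = (if j = b then cnj (U $$ (b,i)) else 0)" if "i < d" "j < d" for i j
  proof -
    have "(mat_adjoint U * ?K) $$ (i,j) = (\<Sum>l<d. if l = b then (if j = b then cnj (U $$ (b,i)) else 0) else 0)"
      by (subst mult_index[OF adj_carrier[OF U] K that]) (rule sum.cong, use U that in \<open>auto simp: adj_index Kx\<close>)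
    then show ?thesis using b by simp
  qed
  have "(mat_adjoint U * ?K * U) $$ (a,c) = (\<Sum>l<d. if l = b then cnj (U $$ (b,a)) * U $$ (b,c) else 0)"
    by (subst mult_index[OF AK U a c]) (rule sum.cong, use U a in \<open>auto simp: AKx\<close>)
  then show ?thesis using b by simp
qed

lemma snap_trace:
  assumes u: "unitary_m d U" and b: "b < d" and Q: "Q \<in> carrier_mat d d" and tr0: "(\<Sum>a<d. Q $$ (a,a)) = 0"
  shows "mtrace (Q * snapshot d U b) = of_nat (d+1) * (\<Sum>a<d. \<Sum>c<d. U $$ (b,a) * Q $$ (a,c) * cnj (U $$ (b,c)))"
proof -
  have U: "U \<in> carrier_mat d d" using u unfolding unitary_m_def by auto
  let ?P = "mat_adjoint U * ketbra (unit_vec d b) (unit_vec d b) * U"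
  have P: "?P \<in> carrier_mat d d" using adj_carrier[OF U] U unfolding ketbra_def by auto
  have trP: "mtrace ?P = 1"
  proof -
    have "mtrace ?P = (\<Sum>a<d. U $$ (b,a) * cnj (U $$ (b,a)))"
      by (subst mtrace_sum[OF P]) (rule sum.cong, use U b in \<open>auto simp: proj_index mult.commute\<close>)
    then show ?thesis using unitary_rows[OF u b b] by simp
  qed
  have S: "snapshot d U b \<in> carrier_mat d d" unfolding snapshot_def M_Cl_inv_def using P by auto
  have Sx: "snapshot d U b $$ (c,a) = of_nat (d+1) * (cnj (U $$ (b,c)) * U $$ (b,a)) - (if c = a then 1 else 0)"
    if "c < d" "a < d" for a c
  proof -
    define P' where "P' = ?P"
    have P': "P' \<in> carrier_mat d d" using P unfolding P'_def .
    have Px: "P' $$ (c,a) = cnj (U $$ (b,c)) * U $$ (b,a)" unfolding P'_def using that U b by (simp only: proj_index)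
    have "snapshot d U b = of_nat (d+1) \<cdot>\<^sub>m P' - 1 \<cdot>\<^sub>m 1\<^sub>m d"
      unfolding snapshot_def M_Cl_inv_def trP P'_def ..
    then show ?thesis using that P' by (simp add: Px)
  qed
  have "mtrace (Q * snapshot d U b) = (\<Sum>a<d. \<Sum>c<d. Q $$ (a,c) * snapshot d U b $$ (c,a))"
  proof -
    have QS: "Q * snapshot d U b \<in> carrier_mat d d" using Q S by auto
    have "mtrace (Q * snapshot d U b) = (\<Sum>a<d. (Q * snapshot d U b) $$ (a,a))" by (rule mtrace_sum[OF QS])
    also have "\<dots> = (\<Sum>a<d. \<Sum>c<d. Q $$ (a,c) * snapshot d U b $$ (c,a))"
      by (rule sum.cong[OF refl]) (rule mult_index[OF Q S]; simp)
    finally show ?thesis .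
  qed
  also have "\<dots> = (\<Sum>a<d. \<Sum>c<d. of_nat (d+1) * (U $$ (b,a) * Q $$ (a,c) * cnj (U $$ (b,c))) - (if c = a then Q $$ (a,c) else 0))"
    by (intro sum.cong refl) (simp add: Sx algebra_simps)
  also have "\<dots> = of_nat (d+1) * (\<Sum>a<d. \<Sum>c<d. U $$ (b,a) * Q $$ (a,c) * cnj (U $$ (b,c))) - (\<Sum>a<d. Q $$ (a,a))"
    by (simp add: sum_subtractf sum_distrib_left)
  finally show ?thesis using tr0 by simp
qed

lemma shadow_formula:
  assumes E: "complete_MUB_ensemble d E" and Q: "Q \<in> carrier_mat d d" and tr0: "(\<Sum>a<d. Q $$ (a,a)) = 0"
    and r: "\<rho> \<in> carrier_mat d d"
  shows "shadow_expect d E Q \<rho> = of_nat (d+1) * (\<Sum>U\<in>E. \<Sum>b<d.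
     (\<Sum>a<d. \<Sum>c<d. U $$ (b,a) * \<rho> $$ (a,c) * cnj (U $$ (b,c))) *
     (\<Sum>a<d. \<Sum>c<d. U $$ (b,a) * Q $$ (a,c) * cnj (U $$ (b,c)))^2)"
proof -
  have cE: "card E = d + 1" and uE: "\<And>U. U \<in> E \<Longrightarrow> unitary_m d U" using E unfolding complete_MUB_ensemble_def by auto
  have "shadow_expect d E Q \<rho> = (1 / of_nat (d+1)) * (\<Sum>U\<in>E. \<Sum>b<d.
     (\<Sum>a<d. \<Sum>c<d. U $$ (b,a) * \<rho> $$ (a,c) * cnj (U $$ (b,c))) *
     (of_nat (d+1) * (\<Sum>a<d. \<Sum>c<d. U $$ (b,a) * Q $$ (a,c) * cnj (U $$ (b,c))))^2)"
    unfolding shadow_expect_def cE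
    apply (rule arg_cong[where f="\<lambda>x. _ * x"])
    apply (intro sum.cong refl)
    apply (subst outcome_prob_sum)
    using uE r unfolding unitary_m_def apply auto[3]
    apply (subst snap_trace[OF uE _ Q tr0]) apply auto
    done
  also have "\<dots> = of_nat (d+1) * (\<Sum>U\<in>E. \<Sum>b<d.
     (\<Sum>a<d. \<Sum>c<d. U $$ (b,a) * \<rho> $$ (a,c) * cnj (U $$ (b,c))) *
     (\<Sum>a<d. \<Sum>c<d. U $$ (b,a) * Q $$ (a,c) * cnj (U $$ (b,c)))^2)"
    by (simp add: power2_eq_square sum_distrib_left sum_divide_distrib field_simps del: of_nat_Suc)
  finally show ?thesis .
qed

lemma fp_MUB:
  assumes E: "complete_MUB_ensemble d E" and d: "d > 0"
  shows "(\<Sum>i\<in>E \<times> {..<d}. \<Sum>j\<in>E \<times> {..<d}. (cmod (\<Sum>a<d. fst i $$ (snd i, a) * cnj (fst j $$ (snd j, a))))^4)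
     = 2 * real (card (E \<times> {..<d}))"
proof -
  have fin: "finite E" and cE: "card E = d + 1" and uE: "\<And>U. U \<in> E \<Longrightarrow> unitary_m d U"
    and mub: "\<And>U V. U \<in> E \<Longrightarrow> V \<in> E \<Longrightarrow> U \<noteq> V \<Longrightarrow> mutually_unbiased d U V"
    using E unfolding complete_MUB_ensemble_def by auto
  have car: "\<And>U. U \<in> E \<Longrightarrow> U \<in> carrier_mat d d" using uE unfolding unitary_m_def by auto
  have row: "(\<Sum>j\<in>E \<times> {..<d}. (cmod (\<Sum>a<d. U $$ (b, a) * cnj (fst j $$ (snd j, a))))^4) = 2"
    if U: "U \<in> E" and b: "b < d" for U b
  proof -
    let ?f = "\<lambda>V c. (cmod (\<Sum>a<d. U $$ (b, a) * cnj (V $$ (c, a))))^4"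
    have "(\<Sum>j\<in>E \<times> {..<d}. (cmod (\<Sum>a<d. U $$ (b, a) * cnj (fst j $$ (snd j, a))))^4) = (\<Sum>V\<in>E. \<Sum>c<d. ?f V c)"
      by (simp add: sum.cartesian_product case_prod_beta)
    also have "\<dots> = (\<Sum>c<d. ?f U c) + (\<Sum>V\<in>E - {U}. \<Sum>c<d. ?f V c)"
      by (rule sum.remove[OF fin U])
    also have "(\<Sum>c<d. ?f U c) = 1"
    proof -
      have "(\<Sum>c<d. ?f U c) = (\<Sum>c<d. if c = b then 1 else 0)"
        by (rule sum.cong[OF refl]) (simp add: unitary_rows[OF uE[OF U] b])
      then show ?thesis using b by simp
    qed
    also have "(\<Sum>V\<in>E - {U}. \<Sum>c<d. ?f V c) = (\<Sum>V\<in>E - {U}. \<Sum>c<d. (1 / real d)^2)"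
    proof (intro sum.cong refl)
      fix V c assume V: "V \<in> E - {U}" and c: "c \<in> {..<d}"
      have "(cmod (braket (basis_vec d U b) (basis_vec d V c)))^2 = 1 / real d"
        using mub[OF U _ _] V b c unfolding mutually_unbiased_def by auto
      then have "(cmod (\<Sum>a<d. U $$ (b, a) * cnj (V $$ (c, a))))^2 = 1 / real d"
        using braket_basis[OF car[OF U] car[of V] b] V c by auto
      moreover have e4: "(x::real)^4 = (x^2)^2" for x by (simp flip: power_mult)
      ultimately show "?f V c = (1 / real d)^2" by (simp only: e4)
    qed
    also have "\<dots> = 1" using cE fin d by (simp add: card_Diff_singleton U power2_eq_square)
    finally show ?thesis by simp
  qed
  have "(\<Sum>i\<in>E \<times> {..<d}. \<Sum>j\<in>E \<times> {..<d}. (cmod (\<Sum>a<d. fst i $$ (snd i, a) * cnj (fst j $$ (snd j, a))))^4)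
     = (\<Sum>i\<in>E \<times> {..<d}. 2)"
    by (rule sum.cong[OF refl]) (auto simp: row)
  then show ?thesis by simp
qed

lemma key_identity:
  assumes E: "complete_MUB_ensemble d E" and d: "d > 0"
    and herm: "\<And>a c. a < d \<Longrightarrow> c < d \<Longrightarrow> cnj (A a c) = A c a"
  shows "(\<Sum>U\<in>E. \<Sum>b<d. (\<Sum>a<d. \<Sum>c<d. U $$ (b,a) * A a c * cnj (U $$ (b,c)))^2) =
     (\<Sum>a<d. \<Sum>c<d. A a c * A c a) + (\<Sum>a<d. A a a)^2"
proof -
  have fin: "finite E" and cE: "card E = d + 1" and uE: "\<And>U. U \<in> E \<Longrightarrow> unitary_m d U"
    using E unfolding complete_MUB_ensemble_def by auto
  define u where "u = (\<lambda>(i :: complex mat \<times> nat) a. cnj (fst i $$ (snd i, a)))"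
  let ?I = "E \<times> {..<d}"
  have GT: "\<forall>a<d. \<forall>b<d. \<forall>c<d. \<forall>e<d. (\<Sum>i\<in>?I. u i a * cnj (u i b) * cnj (u i c) * u i e) =
        (if a = c \<and> b = e then 1 else 0) + (if a = b \<and> c = e then 1 else (0::complex))"
  proof (rule core_design)
    show "finite ?I" using fin by simp
    show "(\<Sum>a<d. cnj (u i a) * u i a) = 1" if "i \<in> ?I" for i
    proof -
      obtain U b where i: "i = (U,b)" and U: "U \<in> E" and b: "b < d" using \<open>i \<in> ?I\<close> by auto
      show ?thesis unfolding u_def i using unitary_rows[OF uE[OF U] b b] by simp
    qed
    show "(\<Sum>i\<in>?I. \<Sum>j\<in>?I. (cmod (\<Sum>a<d. cnj (u i a) * u j a))^4) = 2 * real (card ?I)"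
      unfolding u_def using fp_MUB[OF E d] by simp
    show "card ?I = d * (d + 1)" using cE fin by (simp add: card_cartesian_product)
  qed
  have "(\<Sum>i\<in>?I. (\<Sum>a<d. \<Sum>c<d. cnj (u i a) * A a c * u i c)^2) =
     (\<Sum>a<d. \<Sum>c<d. A a c * A c a) + (\<Sum>a<d. A a a)^2"
    by (rule design_quadratic[OF _ GT herm]) (use fin in auto)
  moreover have "(\<Sum>i\<in>?I. (\<Sum>a<d. \<Sum>c<d. cnj (u i a) * A a c * u i c)^2) =
     (\<Sum>U\<in>E. \<Sum>b<d. (\<Sum>a<d. \<Sum>c<d. U $$ (b,a) * A a c * cnj (U $$ (b,c)))^2)"
    unfolding u_def by (simp add: sum.cartesian_product case_prod_beta)
  ultimately show ?thesis by simp
qed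

lemma herm_real:
  assumes herm: "\<And>a c. a < d \<Longrightarrow> c < d \<Longrightarrow> cnj (A a c) = A c a"
  shows "cnj (\<Sum>a<d. \<Sum>c<d. w a * A a c * cnj (w c)) = (\<Sum>a<d. \<Sum>c<d. w a * A a c * cnj (w c))"
proof -
  have "cnj (\<Sum>a<d. \<Sum>c<d. w a * A a c * cnj (w c)) = (\<Sum>a<d. \<Sum>c<d. cnj (w a) * A c a * w c)"
    by (simp add: herm)
  also have "\<dots> = (\<Sum>a<d. \<Sum>c<d. w a * A a c * cnj (w c))" by (subst sum.swap) (simp add: mult_ac)
  finally show ?thesis .
qed

lemma real_sq_Re:
  assumes "cnj x = x"
  shows "Re (p * x^2) = Re p * (Re x)^2" "Re (x^2) = (Re x)^2"
proof -
  have "Im x = 0" using assms by (metis cnj.simps(2) complex_cnj_cancel_iff complex_eq_iff neg_equal_zero)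
  then show "Re (p * x^2) = Re p * (Re x)^2" "Re (x^2) = (Re x)^2" by (simp_all add: power2_eq_square)
qed

lemma p_braket:
  assumes U: "U \<in> carrier_mat d d" and r: "\<rho> \<in> carrier_mat d d" and b: "b < d"
  shows "braket (basis_vec d U b) (\<rho> *\<^sub>v basis_vec d U b) = (\<Sum>a<d. \<Sum>c<d. U $$ (b,a) * \<rho> $$ (a,c) * cnj (U $$ (b,c)))"
proof -
  have v: "basis_vec d U b \<in> carrier_vec d" by (rule basis_vec_carrier[OF U])
  have rv: "\<rho> *\<^sub>v basis_vec d U b \<in> carrier_vec d" using r v by auto
  have "braket (basis_vec d U b) (\<rho> *\<^sub>v basis_vec d U b) = (\<Sum>a<d. cnj (basis_vec d U b $ a) * (\<rho> *\<^sub>v basis_vec d U b) $ a)"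
    by (rule braket_sum[OF v rv])
  also have "\<dots> = (\<Sum>a<d. U $$ (b,a) * (\<Sum>c<d. \<rho> $$ (a,c) * cnj (U $$ (b,c))))"
  proof (rule sum.cong[OF refl])
    fix a assume a: "a \<in> {..<d}"
    have "(\<rho> *\<^sub>v basis_vec d U b) $ a = (\<Sum>c<d. \<rho> $$ (a,c) * basis_vec d U b $ c)"
      by (rule multv_index[OF r v]) (use a in auto)
    also have "\<dots> = (\<Sum>c<d. \<rho> $$ (a,c) * cnj (U $$ (b,c)))"
      by (rule sum.cong[OF refl]) (simp add: basis_vec_index[OF U _ b])
    finally show "cnj (basis_vec d U b $ a) * (\<rho> *\<^sub>v basis_vec d U b) $ a = U $$ (b,a) * (\<Sum>c<d. \<rho> $$ (a,c) * cnj (U $$ (b,c)))"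
      using a by (simp add: basis_vec_index[OF U _ b])
  qed
  also have "\<dots> = (\<Sum>a<d. \<Sum>c<d. U $$ (b,a) * \<rho> $$ (a,c) * cnj (U $$ (b,c)))"
    by (simp add: sum_distrib_left mult_ac)
  finally show ?thesis .
qed

lemma p_sum:
  assumes u: "unitary_m d U" and r: "\<rho> \<in> carrier_mat d d"
  shows "(\<Sum>b<d. \<Sum>a<d. \<Sum>c<d. U $$ (b,a) * \<rho> $$ (a,c) * cnj (U $$ (b,c))) = mtrace \<rho>"
proof -
  have "(\<Sum>b<d. \<Sum>a<d. \<Sum>c<d. U $$ (b,a) * \<rho> $$ (a,c) * cnj (U $$ (b,c))) =
     (\<Sum>a<d. \<Sum>c<d. \<rho> $$ (a,c) * (\<Sum>b<d. cnj (U $$ (b,c)) * U $$ (b,a)))"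
    by (subst swap3) (simp add: sum_distrib_left mult_ac)
  also have "\<dots> = (\<Sum>a<d. \<Sum>c<d. if c = a then \<rho> $$ (a,c) else 0)"
    by (intro sum.cong refl) (simp add: unitary_cols[OF u])
  also have "\<dots> = mtrace \<rho>" using r by (simp add: mtrace_sum)
  finally show ?thesis .
qed

lemma ifmult: "(if P then 1 else 0) * (x::complex) = (if P then x else 0)" by simp

lemma rho0_density:
  assumes d: "d > 0"
  shows "density_op d ((1 / of_nat d) \<cdot>\<^sub>m 1\<^sub>m d)"
proof -
  let ?r = "(1 / of_nat d) \<cdot>\<^sub>m 1\<^sub>m d :: complex mat"
  have rc: "?r \<in> carrier_mat d d" by simp
  have "mat_adjoint ?r = ?r"
    by (rule eq_matI) (use adj_carrier[OF rc] in \<open>auto simp: adj_index[OF rc]\<close>)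
  then have h: "hermitian_m d ?r" unfolding hermitian_m_def by simp
  have t: "mtrace ?r = 1" using d by (simp add: mtrace_sum[OF rc])
  have psd: "0 \<le> Re (braket v (?r *\<^sub>v v))" if v: "v \<in> carrier_vec d" for v
  proof -
    have rv: "(?r *\<^sub>v v) $ a = (1 / of_nat d) * v $ a" if a: "a < d" for a
    proof -
      have "(?r *\<^sub>v v) $ a = (\<Sum>l<d. ?r $$ (a,l) * v $ l)" by (rule multv_index[OF rc v a])
      also have "\<dots> = (\<Sum>l<d. if l = a then (1 / of_nat d) * v $ l else 0)"
        by (rule sum.cong[OF refl]) (use a in auto)
      finally show ?thesis using a by simp
    qed
    have "braket v (?r *\<^sub>v v) = (\<Sum>a<d. cnj (v $ a) * (?r *\<^sub>v v) $ a)"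
      by (rule braket_sum[OF v]) (use mult_mat_vec_carrier[OF rc v] in auto)
    also have "\<dots> = (\<Sum>a<d. cnj (v $ a) * ((1 / of_nat d) * v $ a))"
      by (rule sum.cong[OF refl]) (simp only: rv lessThan_iff)
    also have "\<dots> = (\<Sum>a<d. of_real ((cmod (v $ a))^2 / real d))"
    proof (rule sum.cong[OF refl])
      fix a
      have "cnj (v $ a) * ((1 / of_nat d) * v $ a) = (v $ a * cnj (v $ a)) / of_nat d" by (simp add: mult_ac)
      also have "\<dots> = of_real ((cmod (v $ a))^2 / real d)" by (simp add: complex_norm_square[symmetric])
      finally show "cnj (v $ a) * ((1 / of_nat d) * v $ a) = of_real ((cmod (v $ a))^2 / real d)" .
    qed
    finally have "Re (braket v (?r *\<^sub>v v)) = (\<Sum>a<d. (cmod (v $ a))^2 / real d)" by (simp add: Re_sum)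
    then show ?thesis by (simp add: sum_nonneg)
  qed
  show ?thesis unfolding density_op_def using h t psd by auto
qed

theorem general:
  assumes d: "d > 0" and E: "complete_MUB_ensemble d E" and H: "hermitian_m d Obs"
  shows "let O0 = Obs - (mtrace Obs / of_nat d) \<cdot>\<^sub>m 1\<^sub>m d in
     shadow_norm_sq d E O0 \<le> (real d + 1) * Re (mtrace (O0 * O0)) \<and>
     ls_shadow_norm_sq d E O0 = (real d + 1) / real d * Re (mtrace (O0 * O0))"
proof -
  have uE: "\<And>U. U \<in> E \<Longrightarrow> unitary_m d U" using E unfolding complete_MUB_ensemble_def by auto
  have car: "\<And>U. U \<in> E \<Longrightarrow> U \<in> carrier_mat d d" using uE unfolding unitary_m_def by auto
  have finE: "finite E" using E unfolding complete_MUB_ensemble_def by auto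
  define t where "t = mtrace Obs"
  define Q where "Q = Obs - (t / of_nat d) \<cdot>\<^sub>m 1\<^sub>m d"
  have Oc: "Obs \<in> carrier_mat d d" and adjO: "mat_adjoint Obs = Obs" using H unfolding hermitian_m_def by auto
  have hO: "cnj (Obs $$ (a,c)) = Obs $$ (c,a)" if "a < d" "c < d" for a c
    using adj_index[OF Oc that(2) that(1)] adjO by simp
  have ct: "cnj t = t" unfolding t_def mtrace_sum[OF Oc] by (simp add: hO)
  have Qc: "Q \<in> carrier_mat d d" unfolding Q_def using Oc by auto
  have Qx: "Q $$ (a,c) = Obs $$ (a,c) - (if a = c then t / of_nat d else 0)" if "a < d" "c < d" for a c
    unfolding Q_def using Oc that by simp
  have hQ: "cnj (Q $$ (a,c)) = Q $$ (c,a)" if "a < d" "c < d" for a c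
    using that by (simp add: Qx hO ct)
  have tr0: "(\<Sum>a<d. Q $$ (a,a)) = 0"
    using d by (simp add: Qx sum_subtractf t_def mtrace_sum[OF Oc])
  have QQ: "mtrace (Q * Q) = (\<Sum>a<d. \<Sum>c<d. Q $$ (a,c) * Q $$ (c,a))"
  proof -
    have "mtrace (Q * Q) = (\<Sum>a<d. (Q * Q) $$ (a,a))" by (rule mtrace_sum) (use Qc in auto)
    also have "\<dots> = (\<Sum>a<d. \<Sum>c<d. Q $$ (a,c) * Q $$ (c,a))"
      by (rule sum.cong[OF refl]) (rule mult_index[OF Qc Qc]; simp)
    finally show ?thesis .
  qed
  define x where "x U b = (\<Sum>a<d. \<Sum>c<d. U $$ (b,a) * Q $$ (a,c) * cnj (U $$ (b,c)))" for U b
  have key: "(\<Sum>U\<in>E. \<Sum>b<d. (x U b)^2) = mtrace (Q * Q)"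
    unfolding x_def QQ using key_identity[OF E d, of "\<lambda>a c. Q $$ (a,c)"] hQ tr0 by simp
  have xr: "cnj (x U b) = x U b" for U b
    unfolding x_def by (rule herm_real) (rule hQ)
  have ReKey: "(\<Sum>U\<in>E. \<Sum>b<d. (Re (x U b))^2) = Re (mtrace (Q * Q))"
    unfolding key[symmetric] by (simp add: Re_sum real_sq_Re(2)[OF xr])
  define p where "p \<rho> U b = (\<Sum>a<d. \<Sum>c<d. U $$ (b,a) * \<rho> $$ (a,c) * cnj (U $$ (b,c)))" for \<rho> U b
  have shad: "Re (shadow_expect d E Q \<rho>) = (real d + 1) * (\<Sum>U\<in>E. \<Sum>b<d. Re (p \<rho> U b) * (Re (x U b))^2)"
    if r: "\<rho> \<in> carrier_mat d d" for \<rho>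
  proof -
    have "shadow_expect d E Q \<rho> = of_nat (d+1) * (\<Sum>U\<in>E. \<Sum>b<d. p \<rho> U b * (x U b)^2)"
      unfolding p_def x_def by (rule shadow_formula[OF E Qc tr0 r])
    moreover have "Re (\<Sum>U\<in>E. \<Sum>b<d. p \<rho> U b * (x U b)^2) = (\<Sum>U\<in>E. \<Sum>b<d. Re (p \<rho> U b) * (Re (x U b))^2)"
      by (simp only: Re_sum real_sq_Re(1)[OF xr])
    moreover have "Re (of_nat (d+1) * z) = (real d + 1) * Re z" for z by simp
    ultimately show ?thesis by simp
  qed
  have part1: "Re (shadow_expect d E Q \<rho>) \<le> (real d + 1) * Re (mtrace (Q * Q))" if r: "density_op d \<rho>" for \<rho>
  proof -
    have rc: "\<rho> \<in> carrier_mat d d" and tr1: "mtrace \<rho> = 1"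
      and psd: "\<And>v. v \<in> carrier_vec d \<Longrightarrow> 0 \<le> Re (braket v (\<rho> *\<^sub>v v))"
      using r unfolding density_op_def hermitian_m_def by auto
    have pnn: "0 \<le> Re (p \<rho> U b)" if "U \<in> E" "b < d" for U b
      using psd[OF basis_vec_carrier[OF car[OF that(1)]], of b] p_braket[OF car[OF that(1)] rc that(2)]
      unfolding p_def by (simp only:)
    have ple: "Re (p \<rho> U b) \<le> 1" if U: "U \<in> E" and b: "b < d" for U b
    proof -
      have "Re (p \<rho> U b) \<le> (\<Sum>b'<d. Re (p \<rho> U b'))"
        by (rule member_le_sum) (use pnn U b in auto)
      also have "\<dots> = Re (\<Sum>b'<d. p \<rho> U b')" by (simp add: Re_sum)
      also have "\<dots> = 1" unfolding p_def p_sum[OF uE[OF U] rc] tr1 by simp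
      finally show ?thesis .
    qed
    have "(\<Sum>U\<in>E. \<Sum>b<d. Re (p \<rho> U b) * (Re (x U b))^2) \<le> (\<Sum>U\<in>E. \<Sum>b<d. (Re (x U b))^2)"
      by (intro sum_mono) (simp add: mult_left_le_one_le pnn ple)
    then show ?thesis unfolding shad[OF rc] ReKey[symmetric]
      by (intro mult_left_mono) auto
  qed
  let ?r0 = "(1 / of_nat d) \<cdot>\<^sub>m 1\<^sub>m d :: complex mat"
  have r0c: "?r0 \<in> carrier_mat d d" by simp
  have p0: "p ?r0 U b = 1 / of_nat d" if U: "U \<in> E" and b: "b < d" for U b
  proof -
    have "p ?r0 U b = (\<Sum>a<d. \<Sum>c<d. if c = a then (1 / of_nat d) * (U $$ (b,a) * cnj (U $$ (b,c))) else 0)"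
      unfolding p_def by (intro sum.cong refl) auto
    also have "\<dots> = (1 / of_nat d) * (\<Sum>a<d. U $$ (b,a) * cnj (U $$ (b,a)))"
      by (simp add: sum_distrib_left)
    also have "\<dots> = 1 / of_nat d" using unitary_rows[OF uE[OF U] b b] by simp
    finally show ?thesis .
  qed
  have part2: "Re (shadow_expect d E Q ?r0) = (real d + 1) / real d * Re (mtrace (Q * Q))"
  proof -
    have "Re (shadow_expect d E Q ?r0) = (real d + 1) * (\<Sum>U\<in>E. \<Sum>b<d. (1 / real d) * (Re (x U b))^2)"
      unfolding shad[OF r0c] by (intro arg_cong[where f="\<lambda>z. (real d + 1) * z"] sum.cong refl) (simp add: p0)
    also have "\<dots> = (real d + 1) / real d * Re (mtrace (Q * Q))"
      unfolding ReKey[symmetric] by (simp add: sum_distrib_left)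
    finally show ?thesis .
  qed
  have ne: "{Re (shadow_expect d E Q \<rho>) | \<rho>. density_op d \<rho>} \<noteq> {}"
    using rho0_density[OF d] by auto
  have sup: "shadow_norm_sq d E Q \<le> (real d + 1) * Re (mtrace (Q * Q))"
    unfolding shadow_norm_sq_def by (rule cSup_least[OF ne]) (auto intro: part1)
  show ?thesis using sup part2 unfolding Let_def Q_def t_def ls_shadow_norm_sq_def by simp
qed


theorem theorem1:
  fixes n :: nat and E :: "complex mat set" and Obs :: "complex mat"
  assumes "complete_MUB_ensemble (2 ^ n) E"
    and "hermitian_m (2 ^ n) Obs"
  shows "let O0 = Obs - (mtrace Obs / 2 ^ n) \<cdot>\<^sub>m 1\<^sub>m (2 ^ n) in
     shadow_norm_sq (2 ^ n) E O0 \<le> (2 ^ n + 1) * Re (mtrace (O0 * O0)) \<and>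
     ls_shadow_norm_sq (2 ^ n) E O0 = (2 ^ n + 1) / 2 ^ n * Re (mtrace (O0 * O0))"
  using general[of "2 ^ n" E Obs] assms by simp

end
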